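(* For every family of pointed spaces $\{(X_i,x_i)\}_{i\in I}$, $$\mathcal{H}_\infty\Big(\prod_{i\in I}X_i,x_\ast\Big)\cong\prod_{i\in I}\mathcal{H}_\infty(X_i,x_i),$$ where $x_\ast=(x_i)_{i\in I}\in\prod_{i\in I}X_i$ (product topology).
   Context: For $n\geq1$, $\mathbb{H}^n=\{(r_0,\dots,r_n)\in\mathbb{R}^{n+1} : (r_0-1/k)^2+\sum_{i=1}^n r_i^2=(1/k)^2 \text{ for some } k\in\mathbb{N}\}$ is the $n$-dimensional Hawaiian earring with base point $\theta$ (the origin); $S^n_k$ is its sphere of radius $1/k$. $\mathbb{H}^\infty$ is the weak join of $\{(\mathbb{H}^n,\theta)\}_{n\in\mathbb{N}}$: the disjoint union with all base points identified to $\theta$, where $U$ is open iff $U\cap\mathbb{H}^n$ is open in $\mathbb{H}^n$ for all $n$ and, if $\theta\in U$, then $\mathbb{H}^n\subseteq U$ for all but finitely many $n$. $\mathcal{H}_\infty(X,x_0)$ is the set of pointed homotopy classes (rel $\{\theta\}$) of continuous maps $(\mathbb{H}^\infty,\theta)\to(X,x_0)$, with group operation $[f][g]=[f\ast g]$ where on each sphere $S^n_k\subseteq\mathbb{H}^n$, $(f\ast g)|_{S^n_k}$ is the usual $\pi_n$-concatenation of $f|_{S^n_k}$ and $g|_{S^n_k}$. *)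

theory Defs
  imports "HOL-Analysis.Analysis" "HOL-Algebra.Product_Groups"
begin

text \<open>A point (r_0,...,r_n) of R^(n+1) is a function r :: nat => real with r i = 0 for i > n.
  The ambient topology is the product topology on nat => real, which restricted to
  functions supported on {0..n} is the Euclidean topology of R^(n+1).\<close>

definition Rtop :: "(nat \<Rightarrow> real) topology" where
  "Rtop = product_topology (\<lambda>_. euclideanreal) UNIV"

definition sph :: "nat \<Rightarrow> nat \<Rightarrow> (nat \<Rightarrow> real) set" where
  "sph n k = {r. (\<forall>i>n. r i = 0) \<and>
      (r 0 - 1 / real k)^2 + (\<Sum>i=1..n. (r i)^2) = (1 / real k)^2}"

definition Hn :: "nat \<Rightarrow> (nat \<Rightarrow> real) set" where
  "Hn n = (\<Union>k\<in>{1..}. sph n k)"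

definition Hn_top :: "nat \<Rightarrow> (nat \<Rightarrow> real) topology" where
  "Hn_top n = subtopology Rtop (Hn n)"

text \<open>Points of H^infinity: the base point thetaH = (0, 0), and pairs (n, r) with n >= 1,
  r in H^n, r distinct from the origin.\<close>

definition thetaH :: "nat \<times> (nat \<Rightarrow> real)" where
  "thetaH = (0, (\<lambda>_. 0))"

definition emb :: "nat \<Rightarrow> (nat \<Rightarrow> real) \<Rightarrow> nat \<times> (nat \<Rightarrow> real)" where
  "emb n r = (if r = (\<lambda>_. 0) then thetaH else (n, r))"

definition Hinf_set :: "(nat \<times> (nat \<Rightarrow> real)) set" where
  "Hinf_set = insert thetaH (\<Union>n\<in>{1..}. emb n ` Hn n)"

definition Hinf_top :: "(nat \<times> (nat \<Rightarrow> real)) topology" where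
  "Hinf_top = topology (\<lambda>U. U \<subseteq> Hinf_set
      \<and> (\<forall>n\<ge>1. openin (Hn_top n) {r \<in> Hn n. emb n r \<in> U})
      \<and> (thetaH \<in> U \<longrightarrow> (\<forall>\<^sub>F n in sequentially. emb n ` Hn n \<subseteq> U)))"

text \<open>I^n as functions t :: nat => real with t i in [0,1] for i < n and t i = 0 otherwise;
  coordinate 0 is the concatenation coordinate.\<close>

definition Icube :: "nat \<Rightarrow> (nat \<Rightarrow> real) set" where
  "Icube n = {t. (\<forall>i<n. 0 \<le> t i \<and> t i \<le> 1) \<and> (\<forall>i\<ge>n. t i = 0)}"

definition cube_bd :: "nat \<Rightarrow> (nat \<Rightarrow> real) set" where
  "cube_bd n = {t \<in> Icube n. \<exists>i<n. t i = 0 \<or> t i = 1}"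

text \<open>An identification of I^n / boundary with the sphere S^n_k sending the boundary to the
  base point (the origin): a continuous surjection I^n -> S^n_k, mapping the boundary to the
  origin and the interior injectively onto S^n_k minus the origin.\<close>

definition std_param :: "(nat \<Rightarrow> nat \<Rightarrow> (nat \<Rightarrow> real) \<Rightarrow> (nat \<Rightarrow> real)) \<Rightarrow> bool" where
  "std_param q \<longleftrightarrow> (\<forall>n\<ge>1. \<forall>k\<ge>1.
      continuous_map (subtopology Rtop (Icube n)) (subtopology Rtop (sph n k)) (q n k)
    \<and> q n k ` Icube n = sph n k
    \<and> (\<forall>t\<in>cube_bd n. q n k t = (\<lambda>_. 0))
    \<and> (\<forall>t\<in>Icube n - cube_bd n. q n k t \<noteq> (\<lambda>_. 0))
    \<and> inj_on (q n k) (Icube n - cube_bd n))"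

text \<open>(f * g) restricted to each sphere S^n_k is the usual pi_n concatenation of f and g
  restricted to S^n_k (with respect to the identification q).\<close>

definition hconcat ::
  "(nat \<Rightarrow> nat \<Rightarrow> (nat \<Rightarrow> real) \<Rightarrow> (nat \<Rightarrow> real))
   \<Rightarrow> (nat \<times> (nat \<Rightarrow> real) \<Rightarrow> 'a) \<Rightarrow> (nat \<times> (nat \<Rightarrow> real) \<Rightarrow> 'a)
   \<Rightarrow> nat \<times> (nat \<Rightarrow> real) \<Rightarrow> 'a" where
  "hconcat q f g p =
    (if p = thetaH then f thetaH
     else (let n = fst p; r = snd p;
               k = (THE k. k \<ge> 1 \<and> r \<in> sph n k);
               t = (THE t. t \<in> Icube n - cube_bd n \<and> q n k t = r)
           in if t 0 \<le> 1/2 then f (emb n (q n k (t(0 := 2 * t 0))))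
              else g (emb n (q n k (t(0 := 2 * t 0 - 1))))))"

definition based_maps :: "'a topology \<Rightarrow> 'a \<Rightarrow> (nat \<times> (nat \<Rightarrow> real) \<Rightarrow> 'a) set" where
  "based_maps X x0 = {f. continuous_map Hinf_top X f \<and> f thetaH = x0}"

definition hclass :: "'a topology \<Rightarrow> 'a \<Rightarrow> (nat \<times> (nat \<Rightarrow> real) \<Rightarrow> 'a)
    \<Rightarrow> (nat \<times> (nat \<Rightarrow> real) \<Rightarrow> 'a) set" where
  "hclass X x0 f = {g \<in> based_maps X x0. homotopic_with (\<lambda>h. h thetaH = x0) Hinf_top X f g}"

definition Hinf_grp ::
  "(nat \<Rightarrow> nat \<Rightarrow> (nat \<Rightarrow> real) \<Rightarrow> (nat \<Rightarrow> real)) \<Rightarrow> 'a topology \<Rightarrow> 'a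
     \<Rightarrow> ((nat \<times> (nat \<Rightarrow> real) \<Rightarrow> 'a) set) monoid" where
  "Hinf_grp q X x0 =
    \<lparr>carrier = hclass X x0 ` based_maps X x0,
     monoid.mult = (\<lambda>A B. hclass X x0 (hconcat q (SOME f. f \<in> A) (SOME g. g \<in> B))),
     one = hclass X x0 (\<lambda>_. x0)\<rparr>"

end

theory Submission imports Defs begin

definition Hopen :: "(nat \<times> (nat \<Rightarrow> real)) set \<Rightarrow> bool" where
  "Hopen U \<longleftrightarrow> U \<subseteq> Hinf_set
      \<and> (\<forall>n\<ge>1. openin (Hn_top n) {r \<in> Hn n. emb n r \<in> U})
      \<and> (thetaH \<in> U \<longrightarrow> (\<forall>\<^sub>F n in sequentially. emb n ` Hn n \<subseteq> U))"

lemma istop_Hopen: "istopology Hopen"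
  unfolding istopology_def
proof (intro conjI allI impI ballI)
  fix S T assume S: "Hopen S" and T: "Hopen T"
  show "Hopen (S \<inter> T)" unfolding Hopen_def
  proof (intro conjI allI impI)
    show "S \<inter> T \<subseteq> Hinf_set" using S unfolding Hopen_def by blast
  next
    fix n :: nat assume "1 \<le> n"
    then have "openin (Hn_top n) ({r \<in> Hn n. emb n r \<in> S} \<inter> {r \<in> Hn n. emb n r \<in> T})"
      using S T unfolding Hopen_def by (intro openin_Int) auto
    moreover have "{r \<in> Hn n. emb n r \<in> S} \<inter> {r \<in> Hn n. emb n r \<in> T} = {r \<in> Hn n. emb n r \<in> S \<inter> T}" by blast
    ultimately show "openin (Hn_top n) {r \<in> Hn n. emb n r \<in> S \<inter> T}" by simp
  next
    assume "thetaH \<in> S \<inter> T"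
    then have "(\<forall>\<^sub>F n in sequentially. emb n ` Hn n \<subseteq> S)" "(\<forall>\<^sub>F n in sequentially. emb n ` Hn n \<subseteq> T)"
      using S T unfolding Hopen_def by auto
    then show "\<forall>\<^sub>F n in sequentially. emb n ` Hn n \<subseteq> S \<inter> T"
      by eventually_elim auto
  qed
next
  fix K assume K: "\<forall>U\<in>K. Hopen U"
  show "Hopen (\<Union>K)" unfolding Hopen_def
  proof (intro conjI allI impI)
    show "\<Union>K \<subseteq> Hinf_set" using K unfolding Hopen_def by blast
  next
    fix n :: nat assume "1 \<le> n"
    then have "openin (Hn_top n) (\<Union>U\<in>K. {r \<in> Hn n. emb n r \<in> U})"
      using K unfolding Hopen_def by (intro openin_Union) auto
    moreover have "(\<Union>U\<in>K. {r \<in> Hn n. emb n r \<in> U}) = {r \<in> Hn n. emb n r \<in> \<Union>K}" by blast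
    ultimately show "openin (Hn_top n) {r \<in> Hn n. emb n r \<in> \<Union>K}" by simp
  next
    assume "thetaH \<in> \<Union>K"
    then obtain U where "U \<in> K" "thetaH \<in> U" by blast
    then have "\<forall>\<^sub>F n in sequentially. emb n ` Hn n \<subseteq> U" using K unfolding Hopen_def by auto
    then show "\<forall>\<^sub>F n in sequentially. emb n ` Hn n \<subseteq> \<Union>K"
      by eventually_elim (use \<open>U \<in> K\<close> in blast)
  qed
qed

lemma openin_Hinf: "openin Hinf_top U \<longleftrightarrow> Hopen U"
proof -
  have "Hinf_top = topology Hopen"
    unfolding Hinf_top_def Hopen_def by simp
  then show ?thesis using istop_Hopen by (metis topology_inverse')
qed

lemma topspace_Rtop [simp]: "topspace Rtop = UNIV"
  unfolding Rtop_def by simp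

lemma topspace_Hn [simp]: "topspace (Hn_top n) = Hn n"
  unfolding Hn_top_def by simp

lemma emb_in_Hinf: "n \<ge> 1 \<Longrightarrow> r \<in> Hn n \<Longrightarrow> emb n r \<in> Hinf_set"
  unfolding Hinf_set_def by auto

lemma emb_in_Hinf': "Suc 0 \<le> n \<Longrightarrow> r \<in> Hn n \<Longrightarrow> emb n r \<in> Hinf_set"
  using emb_in_Hinf by simp

lemma Hopen_Hinf_set: "Hopen Hinf_set"
  unfolding Hopen_def
proof (intro conjI allI impI)
  fix n :: nat assume n: "1 \<le> n"
  have "{r \<in> Hn n. emb n r \<in> Hinf_set} = topspace (Hn_top n)"
    using emb_in_Hinf[OF n] by auto
  then show "openin (Hn_top n) {r \<in> Hn n. emb n r \<in> Hinf_set}" by (metis openin_topspace)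
next
  show "\<forall>\<^sub>F n in sequentially. emb n ` Hn n \<subseteq> Hinf_set"
    using eventually_ge_at_top[of 1] by eventually_elim (auto intro: emb_in_Hinf emb_in_Hinf')
qed simp

lemma topspace_Hinf [simp]: "topspace Hinf_top = Hinf_set"
proof -
  have "topspace Hinf_top = \<Union>{U. openin Hinf_top U}" by (simp add: topspace_def)
  also have "\<dots> = Hinf_set"
    using Hopen_Hinf_set by (auto simp: openin_Hinf Hopen_def)
  finally show ?thesis .
qed

lemma emb_cont: "n \<ge> 1 \<Longrightarrow> continuous_map (Hn_top n) Hinf_top (emb n)"
  unfolding continuous_map_def
  by (auto simp: emb_in_Hinf openin_Hinf Hopen_def)

lemma cont_from_Hinf:
  assumes img: "g ` Hinf_set \<subseteq> topspace Y"
    and cn: "\<And>n. n \<ge> 1 \<Longrightarrow> continuous_map (Hn_top n) Y (g \<circ> emb n)"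
    and th: "\<And>V. openin Y V \<Longrightarrow> g thetaH \<in> V \<Longrightarrow> (\<forall>\<^sub>F n in sequentially. g ` emb n ` Hn n \<subseteq> V)"
  shows "continuous_map Hinf_top Y g"
  unfolding continuous_map_def
proof (intro conjI allI impI)
  show "g \<in> topspace Hinf_top \<rightarrow> topspace Y" using img by auto
  fix V assume V: "openin Y V"
  show "openin Hinf_top {x \<in> topspace Hinf_top. g x \<in> V}"
    unfolding openin_Hinf Hopen_def
  proof (intro conjI allI impI)
    fix n :: nat assume n: "1 \<le> n"
    have "{r \<in> Hn n. emb n r \<in> {x \<in> topspace Hinf_top. g x \<in> V}} = {r \<in> topspace (Hn_top n). (g \<circ> emb n) r \<in> V}"
      using emb_in_Hinf[OF n] by auto
    then show "openin (Hn_top n) {r \<in> Hn n. emb n r \<in> {x \<in> topspace Hinf_top. g x \<in> V}}"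
      using openin_continuous_map_preimage[OF cn[OF n] V] by metis
  next
    assume "thetaH \<in> {x \<in> topspace Hinf_top. g x \<in> V}"
    then have "\<forall>\<^sub>F n in sequentially. g ` emb n ` Hn n \<subseteq> V" using th V by auto
    then show "\<forall>\<^sub>F n in sequentially. emb n ` Hn n \<subseteq> {x \<in> topspace Hinf_top. g x \<in> V}"
      using eventually_ge_at_top[of 1] by eventually_elim (auto intro: emb_in_Hinf emb_in_Hinf')
  qed auto
qed

section \<open>Geometry of the spheres\<close>

lemma sum_atMost_split0: "(\<Sum>i\<le>(n::nat). f i) = f 0 + (\<Sum>i=1..n. (f i :: real))"
proof -
  have "{..n} = insert 0 {1..n}" by auto
  then show ?thesis by simp
qed

lemma sph_iff:
  assumes "k \<ge> 1"
  shows "r \<in> sph n k \<longleftrightarrow> (\<forall>i>n. r i = 0) \<and> (\<Sum>i\<le>n. (r i)^2) * real k = 2 * r 0"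
proof -
  have k: "real k > 0" using assms by simp
  define A where "A = (\<Sum>i=1..n. (r i)^2)"
  have e1: "(r 0 - 1 / real k)^2 = (r 0)^2 - 2 * r 0 / real k + (1 / real k)^2"
    by (simp add: power2_diff field_simps)
  have e2: "((r 0)^2 + A - 2 * r 0 / real k) * real k = ((r 0)^2 + A) * real k - 2 * r 0"
    using k by (simp add: algebra_simps)
  have "(r 0 - 1 / real k)^2 + A = (1 / real k)^2 \<longleftrightarrow> (r 0)^2 + A - 2 * r 0 / real k = 0"
    using e1 by linarith
  also have "\<dots> \<longleftrightarrow> ((r 0)^2 + A - 2 * r 0 / real k) * real k = 0" using k by simp
  also have "\<dots> \<longleftrightarrow> ((r 0)^2 + A) * real k = 2 * r 0" using e2 by linarith
  finally have "(r 0 - 1 / real k)^2 + (\<Sum>i=1..n. (r i)^2) = (1 / real k)^2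
      \<longleftrightarrow> ((r 0)^2 + (\<Sum>i=1..n. (r i)^2)) * real k = 2 * r 0" unfolding A_def .
  then show ?thesis unfolding sph_def by (simp add: sum_atMost_split0)
qed

lemma zero_sph: "(\<lambda>_. 0) \<in> sph n k"
  unfolding sph_def by (simp add: power2_eq_square)

lemma sph_support: "r \<in> sph n k \<Longrightarrow> i > n \<Longrightarrow> r i = 0"
  unfolding sph_def by auto

lemma sum_sq_pos:
  fixes n :: nat
  assumes "\<forall>i>n. r i = 0" "r \<noteq> (\<lambda>_. 0)"
  shows "(\<Sum>i\<le>n. (r i)^2) > (0::real)"
proof -
  obtain i where i: "r i \<noteq> 0" using assms(2) by auto
  then have "i \<le> n" using assms(1) by (metis not_less)
  have "(r i)^2 \<le> (\<Sum>i\<le>n. (r i)^2)"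
    by (rule member_le_sum) (use \<open>i \<le> n\<close> in auto)
  moreover have "(r i)^2 > 0" using i by simp
  ultimately show ?thesis by linarith
qed

lemma sph_unique:
  assumes "k \<ge> 1" "j \<ge> 1" "r \<in> sph n k" "r \<in> sph n j" "r \<noteq> (\<lambda>_. 0)"
  shows "k = j"
proof -
  have s: "(\<forall>i>n. r i = 0)" using assms(3) sph_support by blast
  have "(\<Sum>i\<le>n. (r i)^2) * real k = (\<Sum>i\<le>n. (r i)^2) * real j"
    using assms sph_iff by simp
  then show ?thesis using sum_sq_pos[OF s assms(5)] by simp
qed

lemma sph_bound:
  assumes "k \<ge> 1" "r \<in> sph n k"
  shows "\<bar>r i\<bar> \<le> 2 / real k"
proof -
  have k: "real k > 0" using assms by simp
  have eq: "(r 0 - 1 / real k)^2 + (\<Sum>i=1..n. (r i)^2) = (1 / real k)^2"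
    using assms(2) unfolding sph_def by auto
  have nn: "(\<Sum>i=1..n. (r i)^2) \<ge> 0" by (simp add: sum_nonneg)
  show ?thesis
  proof (cases "i = 0")
    case True
    have "(r 0 - 1 / real k)^2 \<le> (1 / real k)^2" using eq nn by linarith
    then have "\<bar>r 0 - 1 / real k\<bar> \<le> \<bar>1 / real k\<bar>" using abs_le_square_iff by blast
    then show ?thesis using True k by (simp add: abs_if split: if_splits) linarith?
  next
    case False
    show ?thesis
    proof (cases "i \<le> n")
      case True
      have "(r i)^2 \<le> (\<Sum>i=1..n. (r i)^2)"
        by (rule member_le_sum) (use True False in auto)
      then have "(r i)^2 \<le> (1 / real k)^2" using eq by (smt (verit) zero_le_power2)
      then have "\<bar>r i\<bar> \<le> \<bar>1 / real k\<bar>" using abs_le_square_iff by blast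
      then show ?thesis using k by (simp add: field_simps)
    next
      case False
      then show ?thesis using sph_support[OF assms(2)] k by simp
    qed
  qed
qed

lemma sph_sub_Hn: "k \<ge> 1 \<Longrightarrow> sph n k \<subseteq> Hn n"
  unfolding Hn_def by auto

lemma Hn_cases: "r \<in> Hn n \<Longrightarrow> \<exists>k\<ge>1. r \<in> sph n k"
  unfolding Hn_def by auto

lemma zero_Hn: "(\<lambda>_. 0) \<in> Hn n"
  using zero_sph sph_sub_Hn[of 1] by blast

lemma near0:
  assumes "openin Rtop T" "(\<lambda>_. 0) \<in> T"
  shows "\<exists>e>0. \<forall>x. (\<forall>i. \<bar>x i\<bar> < e) \<longrightarrow> x \<in> T"
proof -
  obtain U where fin: "finite {i \<in> UNIV. U i \<noteq> topspace euclideanreal}"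
    and op: "\<forall>i \<in> UNIV. openin euclideanreal (U i)"
    and z: "(\<lambda>_. 0) \<in> Pi\<^sub>E UNIV U" and sub: "Pi\<^sub>E UNIV U \<subseteq> T"
    using assms unfolding Rtop_def openin_product_topology_alt by blast
  have "\<exists>e>0. \<forall>y. \<bar>y\<bar> < e \<longrightarrow> y \<in> U i" for i
  proof -
    have "open (U i)" "0 \<in> U i" using op z by auto
    then obtain e where "e > 0" "ball 0 e \<subseteq> U i" using open_contains_ball by blast
    then show ?thesis by (force simp: subset_iff dist_real_def)
  qed
  then obtain e where e: "\<And>i. e i > 0" "\<And>i y. \<bar>y\<bar> < e i \<Longrightarrow> y \<in> U i" by metis
  define F where "F = {i. U i \<noteq> UNIV}"
  have fF: "finite F" using fin unfolding F_def by simp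
  define \<epsilon> where "\<epsilon> = Min (insert 1 (e ` F))"
  have ep: "\<epsilon> > 0" unfolding \<epsilon>_def using fF e by (subst Min_gr_iff) auto
  have epi: "i \<in> F \<Longrightarrow> \<epsilon> \<le> e i" for i unfolding \<epsilon>_def using fF by (intro Min_le) auto
  show ?thesis
  proof (intro exI conjI allI impI)
    fix x :: "nat \<Rightarrow> real" assume x: "\<forall>i. \<bar>x i\<bar> < \<epsilon>"
    have "x i \<in> U i" for i
    proof (cases "i \<in> F")
      case True then show ?thesis using x epi e by (meson order_less_le_trans)
    next
      case False then show ?thesis unfolding F_def by auto
    qed
    then have "x \<in> Pi\<^sub>E UNIV U" by auto
    then show "x \<in> T" using sub by blast
  qed (rule ep)
qed

lemma ev_sph_sub:
  assumes "openin Rtop T" "(\<lambda>_. 0) \<in> T"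
  shows "\<forall>\<^sub>F k in sequentially. sph n k \<subseteq> T"
proof -
  obtain e where e: "e > 0" "\<And>x. (\<forall>i. \<bar>x i\<bar> < e) \<Longrightarrow> x \<in> T" using near0[OF assms] by blast
  show ?thesis
    using eventually_ge_at_top[of "nat \<lceil>2/e\<rceil> + 1"]
  proof eventually_elim
    case (elim k)
    then have k1: "k \<ge> 1" by simp
    have "real k > 2 / e" using elim by linarith
    then have "2 / real k < e" using e k1 by (simp add: field_simps)
    then show ?case using sph_bound[OF k1] e(2) by (meson order_le_less_trans subsetI)
  qed
qed

section \<open>Quotient maps and gluing\<close>

lemma Icube_PiE: "Icube n = Pi\<^sub>E UNIV (\<lambda>i. if i < n then {0..1} else {0})"
proof (rule Set.set_eqI)
  fix t :: "nat \<Rightarrow> real"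
  have "(\<forall>i. t i \<in> (if i < n then {0..1} else {0})) \<longleftrightarrow> (\<forall>i<n. 0 \<le> t i \<and> t i \<le> 1) \<and> (\<forall>i\<ge>n. t i = 0)"
  proof safe
    fix i assume "\<forall>i. t i \<in> (if i < n then {0..1} else {0})"
    then have h: "t i \<in> (if i < n then {0..1} else {0})" by blast
    { assume "i < n" then show "0 \<le> t i" "t i \<le> 1" using h by auto }
    { assume "n \<le> i" then show "t i = 0" using h by auto }
  next
    fix i assume "\<forall>i<n. 0 \<le> t i \<and> t i \<le> 1" "\<forall>i\<ge>n. t i = 0"
    then show "t i \<in> (if i < n then {0..1} else {0})" by (cases "i < n") auto
  qed
  then show "t \<in> Icube n \<longleftrightarrow> t \<in> Pi\<^sub>E UNIV (\<lambda>i. if i < n then {0..1} else {0})"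
    unfolding Icube_def PiE_UNIV_domain Pi_iff by simp
qed

lemma compact_Icube: "compactin Rtop (Icube n)"
  unfolding Icube_PiE Rtop_def compactin_PiE by (simp add: compactin_euclidean_iff)

lemma Hausdorff_Rtop: "Hausdorff_space Rtop"
  unfolding Rtop_def Hausdorff_space_product_topology by auto

lemma q_quot:
  assumes "std_param q" "n \<ge> 1" "k \<ge> 1"
  shows "quotient_map (subtopology Rtop (Icube n)) (subtopology Rtop (sph n k)) (q n k)"
proof (rule continuous_imp_quotient_map)
  show "continuous_map (subtopology Rtop (Icube n)) (subtopology Rtop (sph n k)) (q n k)"
    using assms unfolding std_param_def by blast
  show "compact_space (subtopology Rtop (Icube n))"
    by (rule compact_space_subtopology[OF compact_Icube])
  show "Hausdorff_space (subtopology Rtop (sph n k))"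
    by (rule Hausdorff_space_subtopology[OF Hausdorff_Rtop])
  show "q n k ` topspace (subtopology Rtop (Icube n)) = topspace (subtopology Rtop (sph n k))"
    using assms unfolding std_param_def by simp
qed

lemma via_quot:
  assumes "std_param q" "n \<ge> 1" "k \<ge> 1"
    and "continuous_map (subtopology Rtop (Icube n)) Y (G \<circ> q n k)"
  shows "continuous_map (subtopology Rtop (sph n k)) Y G"
  using continuous_compose_quotient_map[OF q_quot[OF assms(1-3)] assms(4)] .

lemma cont_proj: "continuous_map Rtop euclideanreal (\<lambda>y. y i)"
  unfolding Rtop_def by (rule continuous_map_product_projection) simp

lemma cont_S: "continuous_map Rtop euclideanreal (\<lambda>y. \<Sum>i\<le>n. (y i)^2)"
  unfolding power2_eq_square by (intro continuous_intros cont_proj) auto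

lemma openin_Rtop_less:
  assumes "continuous_map Rtop euclideanreal f" "continuous_map Rtop euclideanreal g"
  shows "openin Rtop {y. f y < g y}"
proof -
  have "openin Rtop {y \<in> topspace Rtop. (\<lambda>y. g y - f y) y \<in> {0<..}}"
    by (rule openin_continuous_map_preimage) (auto intro: continuous_map_diff assms)
  moreover have "{y \<in> topspace Rtop. (\<lambda>y. g y - f y) y \<in> {0<..}} = {y. f y < g y}" by auto
  ultimately show ?thesis by simp
qed

lemma glue:
  assumes cont: "\<And>k. k \<ge> 1 \<Longrightarrow> continuous_map (subtopology Rtop (sph n k)) Y G"
    and img: "G ` Hn n \<subseteq> topspace Y"
    and ev: "\<And>V. openin Y V \<Longrightarrow> G (\<lambda>_. 0) \<in> V \<Longrightarrow> \<forall>\<^sub>F k in sequentially. G ` sph n k \<subseteq> V"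
  shows "continuous_map (Hn_top n) Y G"
  unfolding continuous_map_def
proof (intro conjI allI impI)
  show "G \<in> topspace (Hn_top n) \<rightarrow> topspace Y" using img by auto
  fix V assume V: "openin Y V"
  have pre: "\<exists>T. openin Rtop T \<and> {r \<in> sph n k. G r \<in> V} = T \<inter> sph n k" if "k \<ge> 1" for k
  proof -
    have "openin (subtopology Rtop (sph n k)) {r \<in> topspace (subtopology Rtop (sph n k)). G r \<in> V}"
      by (rule openin_continuous_map_preimage[OF cont[OF that] V])
    then show ?thesis by (simp add: openin_subtopology)
  qed
  have loc: "\<exists>W. openin Rtop W \<and> x \<in> W \<and> W \<inter> Hn n \<subseteq> {r \<in> Hn n. G r \<in> V}"
    if x: "x \<in> Hn n" "G x \<in> V" for x
  proof (cases "x = (\<lambda>_. 0)")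
    case True
    obtain K where K: "\<And>k. k \<ge> K \<Longrightarrow> G ` sph n k \<subseteq> V"
      using ev[OF V] x True unfolding eventually_sequentially by blast
    obtain Tf where Tf: "\<And>k. k \<ge> 1 \<Longrightarrow> openin Rtop (Tf k) \<and> {r \<in> sph n k. G r \<in> V} = Tf k \<inter> sph n k"
      using pre by metis
    define W where "W = (\<Inter>k\<in>{1..<K}. Tf k) \<inter> topspace Rtop"
    show ?thesis
    proof (intro exI conjI)
      show "openin Rtop W" unfolding W_def using Tf by (intro openin_INT) auto
      have "x \<in> Tf k" if "k \<in> {1..<K}" for k
      proof -
        have "x \<in> {r \<in> sph n k. G r \<in> V}" using True x zero_sph by simp
        then show ?thesis using Tf[of k] that by auto
      qed
      then show "x \<in> W" unfolding W_def by auto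
      show "W \<inter> Hn n \<subseteq> {r \<in> Hn n. G r \<in> V}"
      proof safe
        fix y assume y: "y \<in> W" "y \<in> Hn n"
        then obtain j where j: "j \<ge> 1" "y \<in> sph n j" using Hn_cases by blast
        show "G y \<in> V"
        proof (cases "j \<ge> K")
          case True then show ?thesis using K j by blast
        next
          case False
          then have "y \<in> Tf j" using y j unfolding W_def by auto
          then show ?thesis using Tf[OF j(1)] j by blast
        qed
      qed
    qed
  next
    case False
    obtain k where k: "k \<ge> 1" "x \<in> sph n k" using Hn_cases x by blast
    obtain T where T: "openin Rtop T" "{r \<in> sph n k. G r \<in> V} = T \<inter> sph n k" using pre[OF k(1)] by blast
    define S where "S = (\<lambda>y::nat\<Rightarrow>real. \<Sum>i\<le>n. (y i)^2)"
    define W0 where "W0 = {y. 2 * y 0 < (real k + 1/2) * S y} \<inter> {y. (real k - 1/2) * S y < 2 * y 0}"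
    have oW0: "openin Rtop W0" unfolding W0_def S_def
      by (intro openin_Int openin_Rtop_less continuous_map_real_mult continuous_map_const[THEN iffD2] cont_S cont_proj) auto
    have Sx: "S x > 0" unfolding S_def using sum_sq_pos[OF _ False] sph_support[OF k(2)] by blast
    have Sxk: "S x * real k = 2 * x 0" using k sph_iff unfolding S_def by blast
    show ?thesis
    proof (intro exI conjI)
      show "openin Rtop (T \<inter> W0)" using T(1) oW0 by (rule openin_Int)
      have "x \<in> T" using T x k by blast
      moreover have "x \<in> W0"
      proof -
        have "S x * real k < S x * (real k + 1/2)" "S x * (real k - 1/2) < S x * real k"
          using Sx by simp_all
        then show ?thesis unfolding W0_def using Sxk by (simp add: mult.commute)
      qed
      ultimately show "x \<in> T \<inter> W0" by blast
      show "T \<inter> W0 \<inter> Hn n \<subseteq> {r \<in> Hn n. G r \<in> V}"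
      proof safe
        fix y assume y: "y \<in> T" "y \<in> W0" "y \<in> Hn n"
        then obtain j where j: "j \<ge> 1" "y \<in> sph n j" using Hn_cases by blast
        have Syj: "S y * real j = 2 * y 0" using j sph_iff unfolding S_def by blast
        have w: "2 * y 0 < (real k + 1/2) * S y" "(real k - 1/2) * S y < 2 * y 0"
          using y(2) unfolding W0_def by auto
        have "S y \<ge> 0" unfolding S_def by (simp add: sum_nonneg)
        moreover have "S y \<noteq> 0" using w by auto
        ultimately have Sy: "S y > 0" by simp
        have "S y * real j < S y * (real k + 1/2)" "S y * (real k - 1/2) < S y * real j"
          using w Syj by (simp_all add: mult.commute)
        then have "real j < real k + 1/2" "real k - 1/2 < real j"
          using Sy by simp_all
        then have "j = k" by linarith
        then show "G y \<in> V" using T y j by blast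
      qed
    qed
  qed
  show "openin (Hn_top n) {x \<in> topspace (Hn_top n). G x \<in> V}"
    unfolding topspace_Hn
  proof (subst openin_subopen, intro ballI)
    fix x assume "x \<in> {x \<in> Hn n. G x \<in> V}"
    then obtain W where W: "openin Rtop W" "x \<in> W" "W \<inter> Hn n \<subseteq> {r \<in> Hn n. G r \<in> V}"
      using loc by blast
    show "\<exists>T. openin (Hn_top n) T \<and> x \<in> T \<and> T \<subseteq> {x \<in> Hn n. G x \<in> V}"
    proof (intro exI conjI)
      show "openin (Hn_top n) (W \<inter> Hn n)" unfolding Hn_top_def openin_subtopology using W(1) by blast
    qed (use W \<open>x \<in> {x \<in> Hn n. G x \<in> V}\<close> in auto)
  qed
qed

section \<open>Inverting the parametrisation\<close>

definition kof :: "nat \<Rightarrow> (nat \<Rightarrow> real) \<Rightarrow> nat" where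
  "kof n r = (THE k. k \<ge> 1 \<and> r \<in> sph n k)"

definition tof :: "(nat \<Rightarrow> nat \<Rightarrow> (nat \<Rightarrow> real) \<Rightarrow> (nat \<Rightarrow> real)) \<Rightarrow> nat \<Rightarrow> (nat \<Rightarrow> real) \<Rightarrow> (nat \<Rightarrow> real)" where
  "tof q n r = (THE t. t \<in> Icube n - cube_bd n \<and> q n (kof n r) t = r)"

lemma kof_eq:
  assumes a: "k \<ge> 1" "r \<in> sph n k" "r \<noteq> (\<lambda>_. 0)"
  shows "kof n r = k"
  unfolding kof_def
proof (rule the_equality)
  show "k \<ge> 1 \<and> r \<in> sph n k" using a by simp
  fix j assume "j \<ge> 1 \<and> r \<in> sph n j"
  then show "j = k" using sph_unique[of j k r n] a by simp
qed

lemma sp_all: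
  assumes "std_param q" "n \<ge> 1" "k \<ge> 1"
  shows "continuous_map (subtopology Rtop (Icube n)) (subtopology Rtop (sph n k)) (q n k)
    \<and> q n k ` Icube n = sph n k
    \<and> (\<forall>t\<in>cube_bd n. q n k t = (\<lambda>_. 0))
    \<and> (\<forall>t\<in>Icube n - cube_bd n. q n k t \<noteq> (\<lambda>_. 0))
    \<and> inj_on (q n k) (Icube n - cube_bd n)"
proof -
  have "\<forall>n\<ge>1. \<forall>k\<ge>1. continuous_map (subtopology Rtop (Icube n)) (subtopology Rtop (sph n k)) (q n k)
    \<and> q n k ` Icube n = sph n k
    \<and> (\<forall>t\<in>cube_bd n. q n k t = (\<lambda>_. 0))
    \<and> (\<forall>t\<in>Icube n - cube_bd n. q n k t \<noteq> (\<lambda>_. 0))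
    \<and> inj_on (q n k) (Icube n - cube_bd n)" using assms(1) unfolding std_param_def .
  then show ?thesis using assms(2,3) by simp
qed

lemma sp_cont: "std_param q \<Longrightarrow> n \<ge> 1 \<Longrightarrow> k \<ge> 1 \<Longrightarrow>
    continuous_map (subtopology Rtop (Icube n)) (subtopology Rtop (sph n k)) (q n k)"
  using sp_all[of q n k] by simp

lemma sp_img: "std_param q \<Longrightarrow> n \<ge> 1 \<Longrightarrow> k \<ge> 1 \<Longrightarrow> q n k ` Icube n = sph n k"
  using sp_all[of q n k] by simp

lemma sp_bd: "std_param q \<Longrightarrow> n \<ge> 1 \<Longrightarrow> k \<ge> 1 \<Longrightarrow> t \<in> cube_bd n \<Longrightarrow> q n k t = (\<lambda>_. 0)"
  using sp_all[of q n k] by (simp del: fun_eq_iff)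

lemma sp_int: "std_param q \<Longrightarrow> n \<ge> 1 \<Longrightarrow> k \<ge> 1 \<Longrightarrow> t \<in> Icube n - cube_bd n \<Longrightarrow> q n k t \<noteq> (\<lambda>_. 0)"
  using sp_all[of q n k] by simp

lemma sp_inj: "std_param q \<Longrightarrow> n \<ge> 1 \<Longrightarrow> k \<ge> 1 \<Longrightarrow> inj_on (q n k) (Icube n - cube_bd n)"
  using sp_all[of q n k] by simp

lemma tof_q:
  assumes "std_param q" "n \<ge> 1" "k \<ge> 1" "t \<in> Icube n - cube_bd n"
  shows "kof n (q n k t) = k" "tof q n (q n k t) = t"
proof -
  have qs: "q n k t \<in> sph n k" using sp_img[OF assms(1-3)] assms(4) by blast
  show kk: "kof n (q n k t) = k" by (rule kof_eq[OF assms(3) qs sp_int[OF assms]])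
  show "tof q n (q n k t) = t" unfolding tof_def kk
  proof (rule the_equality)
    show "t \<in> Icube n - cube_bd n \<and> q n k t = q n k t" using assms(4) by simp
    fix s assume "s \<in> Icube n - cube_bd n \<and> q n k s = q n k t"
    then show "s = t" using inj_onD[OF sp_inj[OF assms(1-3)], of s t] assms(4) by simp
  qed
qed

lemma tof_ex:
  assumes "std_param q" "n \<ge> 1" "k \<ge> 1" "r \<in> sph n k" "r \<noteq> (\<lambda>_. 0)"
  shows "kof n r = k" "tof q n r \<in> Icube n - cube_bd n" "q n k (tof q n r) = r"
proof -
  obtain t where t: "t \<in> Icube n" "q n k t = r" using sp_img[OF assms(1-3)] assms(4) by (metis imageE)
  have "t \<notin> cube_bd n" using sp_bd[OF assms(1-3), of t] t(2) assms(5) by metis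
  then have ti: "t \<in> Icube n - cube_bd n" using t by blast
  show "kof n r = k" by (rule kof_eq[OF assms(3,4,5)])
  have tt: "tof q n r = t" using tof_q(2)[OF assms(1-3) ti] t(2) by simp
  show "tof q n r \<in> Icube n - cube_bd n" using tt ti by simp
  show "q n k (tof q n r) = r" using tt t(2) by simp
qed

lemma Hinf_set_cases:
  assumes "x \<in> Hinf_set"
  obtains "x = thetaH" | n r where "n \<ge> 1" "r \<in> Hn n" "r \<noteq> (\<lambda>_. 0)" "x = (n, r)"
proof (cases "x = thetaH")
  case True then show ?thesis using that by simp
next
  case False
  then obtain n r where nr: "n \<ge> 1" "r \<in> Hn n" "x = emb n r"
    using assms unfolding Hinf_set_def by auto
  then have "r \<noteq> (\<lambda>_. 0)" using False unfolding emb_def by auto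
  then show ?thesis using that nr unfolding emb_def by simp
qed

lemma emb_zero [simp]: "emb n (\<lambda>_. 0) = thetaH"
  unfolding emb_def by simp

lemma emb_nz: "r \<noteq> (\<lambda>_. 0) \<Longrightarrow> emb n r = (n, r)"
  unfolding emb_def by simp

lemma thetaH_in [simp]: "thetaH \<in> Hinf_set"
  unfolding Hinf_set_def by simp

definition smap where
  "smap q \<phi> n r = (if r = (\<lambda>_. 0) then (\<lambda>_. 0) else q n (kof n r) (\<phi> n (tof q n r)))"

definition cube_ok :: "(nat \<Rightarrow> (nat \<Rightarrow> real) \<Rightarrow> (nat \<Rightarrow> real)) \<Rightarrow> bool" where
  "cube_ok \<phi> \<longleftrightarrow> (\<forall>n\<ge>1. continuous_map (subtopology Rtop (Icube n)) (subtopology Rtop (Icube n)) (\<phi> n)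
       \<and> (\<forall>t\<in>cube_bd n. \<phi> n t \<in> cube_bd n))"

lemma cube_ok_in: "cube_ok \<phi> \<Longrightarrow> n \<ge> 1 \<Longrightarrow> t \<in> Icube n \<Longrightarrow> \<phi> n t \<in> Icube n"
  unfolding cube_ok_def using continuous_map_image_subset_topspace by fastforce

lemma smap_q:
  assumes "std_param q" "cube_ok \<phi>" "n \<ge> 1" "k \<ge> 1" "t \<in> Icube n"
  shows "smap q \<phi> n (q n k t) = q n k (\<phi> n t)"
proof (cases "t \<in> cube_bd n")
  case True
  then have "\<phi> n t \<in> cube_bd n" using assms(2,3) unfolding cube_ok_def by blast
  then show ?thesis using sp_bd[OF assms(1,3,4)] True unfolding smap_def by simp
next
  case False
  then have ti: "t \<in> Icube n - cube_bd n" using assms(5) by blast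
  show ?thesis using sp_int[OF assms(1,3,4) ti] tof_q[OF assms(1,3,4) ti] unfolding smap_def by simp
qed

lemma smap_sph:
  assumes "std_param q" "cube_ok \<phi>" "n \<ge> 1" "k \<ge> 1" "r \<in> sph n k"
  shows "smap q \<phi> n r \<in> sph n k"
proof (cases "r = (\<lambda>_. 0)")
  case True then show ?thesis unfolding smap_def by (simp add: zero_sph)
next
  case False
  note te = tof_ex[OF assms(1,3,4,5) False]
  have "\<phi> n (tof q n r) \<in> Icube n" using cube_ok_in[OF assms(2,3)] te(2) by blast
  then show ?thesis using False te(1) sp_img[OF assms(1,3,4)] unfolding smap_def by auto
qed

lemma smap_Hn:
  assumes "std_param q" "cube_ok \<phi>" "n \<ge> 1" "r \<in> Hn n"
  shows "smap q \<phi> n r \<in> Hn n"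
  using assms smap_sph Hn_cases sph_sub_Hn by blast

lemma smap_cont:
  assumes sp: "std_param q" and ok: "cube_ok \<phi>" and n: "n \<ge> 1"
  shows "continuous_map (Hn_top n) (Hn_top n) (smap q \<phi> n)"
proof (rule glue)
  fix k :: nat assume k: "k \<ge> 1"
  show "continuous_map (subtopology Rtop (sph n k)) (Hn_top n) (smap q \<phi> n)"
  proof (rule via_quot[OF sp n k])
    have c1: "continuous_map (subtopology Rtop (Icube n)) (subtopology Rtop (sph n k)) (q n k \<circ> \<phi> n)"
      using ok n unfolding cube_ok_def by (metis continuous_map_compose sp_cont[OF sp n k])
    have "continuous_map (subtopology Rtop (Icube n)) (Hn_top n) (q n k \<circ> \<phi> n)"
      unfolding Hn_top_def using c1 sph_sub_Hn[OF k]
      by (simp add: continuous_map_in_subtopology) blast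
    then show "continuous_map (subtopology Rtop (Icube n)) (Hn_top n) (smap q \<phi> n \<circ> q n k)"
      by (rule continuous_map_eq) (simp add: smap_q[OF sp ok n k])
  qed
next
  show "smap q \<phi> n ` Hn n \<subseteq> topspace (Hn_top n)" using smap_Hn[OF sp ok n] by auto
next
  fix V assume V: "openin (Hn_top n) V" "smap q \<phi> n (\<lambda>_. 0) \<in> V"
  then obtain T where T: "openin Rtop T" "V = T \<inter> Hn n" unfolding Hn_top_def openin_subtopology by blast
  have "(\<lambda>_. 0) \<in> T" using V T unfolding smap_def by simp
  then have "\<forall>\<^sub>F k in sequentially. sph n k \<subseteq> T" using ev_sph_sub T(1) by blast
  then show "\<forall>\<^sub>F k in sequentially. smap q \<phi> n ` sph n k \<subseteq> V"
    using eventually_ge_at_top[of 1]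
  proof eventually_elim
    case (elim k)
    then show ?case using smap_sph[OF sp ok n, of k] sph_sub_Hn[of k n] T(2) by blast
  qed
qed

definition Amap where
  "Amap q \<phi> x = emb (fst x) (smap q \<phi> (fst x) (snd x))"

lemma Amap_emb:
  assumes "n \<ge> 1" "r \<in> Hn n"
  shows "Amap q \<phi> (emb n r) = emb n (smap q \<phi> n r)"
proof (cases "r = (\<lambda>_. 0)")
  case True
  then show ?thesis unfolding Amap_def thetaH_def smap_def emb_def by simp
next
  case False
  then show ?thesis unfolding Amap_def by (simp add: emb_nz)
qed

lemma Amap_theta [simp]: "Amap q \<phi> thetaH = thetaH"
  unfolding Amap_def thetaH_def smap_def emb_def by simp

lemma Amap_cont:
  assumes sp: "std_param q" and ok: "cube_ok \<phi>"
  shows "continuous_map Hinf_top Hinf_top (Amap q \<phi>)"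
proof (rule cont_from_Hinf)
  show "Amap q \<phi> ` Hinf_set \<subseteq> topspace Hinf_top"
  proof
    fix y assume "y \<in> Amap q \<phi> ` Hinf_set"
    then obtain x where x: "x \<in> Hinf_set" "y = Amap q \<phi> x" by blast
    from x(1) show "y \<in> topspace Hinf_top"
    proof (cases rule: Hinf_set_cases)
      case 1 then show ?thesis using x by simp
    next
      case (2 n r)
      then have "x = emb n r" by (simp add: emb_nz)
      then show ?thesis using x 2 Amap_emb smap_Hn[OF sp ok] emb_in_Hinf by simp
    qed
  qed
next
  fix n :: nat assume n: "n \<ge> 1"
  have "continuous_map (Hn_top n) Hinf_top (emb n \<circ> smap q \<phi> n)"
    using continuous_map_compose[OF smap_cont[OF sp ok n] emb_cont[OF n]] .
  then show "continuous_map (Hn_top n) Hinf_top (Amap q \<phi> \<circ> emb n)"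
    by (rule continuous_map_eq) (simp add: Amap_emb[OF n])
next
  fix V assume V: "openin Hinf_top V" "Amap q \<phi> thetaH \<in> V"
  then have "\<forall>\<^sub>F n in sequentially. emb n ` Hn n \<subseteq> V"
    unfolding openin_Hinf Hopen_def by simp
  then show "\<forall>\<^sub>F n in sequentially. Amap q \<phi> ` emb n ` Hn n \<subseteq> V"
    using eventually_ge_at_top[of 1]
  proof eventually_elim
    case (elim n)
    have "Amap q \<phi> ` emb n ` Hn n \<subseteq> emb n ` Hn n"
      using Amap_emb[OF elim(2)] smap_Hn[OF sp ok elim(2)] by auto
    then show ?case using elim by blast
  qed
qed

lemma cube_int: "t \<in> Icube n - cube_bd n \<Longrightarrow> i < n \<Longrightarrow> 0 < t i \<and> t i < 1"
  unfolding Icube_def cube_bd_def by (force simp: less_le)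

lemma cont_into_Rtop: "(\<And>i. continuous_map X euclideanreal (\<lambda>x. f x i)) \<Longrightarrow> continuous_map X Rtop f"
  unfolding Rtop_def continuous_map_componentwise_UNIV by simp

lemma cube_ok_upd:
  assumes hc: "continuous_on UNIV h" and h01: "\<And>x. 0 \<le> x \<Longrightarrow> x \<le> 1 \<Longrightarrow> 0 \<le> h x \<and> h x \<le> 1"
    and h0: "h 0 = 0 \<or> h 0 = 1" and h1: "h 1 = 0 \<or> h 1 = 1"
  shows "cube_ok (\<lambda>n t. t(0 := h (t 0)))"
  unfolding cube_ok_def
proof (intro allI impI conjI ballI)
  fix n :: nat assume n: "n \<ge> 1"
  have img: "t(0 := h (t 0)) \<in> Icube n" if "t \<in> Icube n" for t
  proof -
    have "0 \<le> t 0 \<and> t 0 \<le> 1" using that n unfolding Icube_def by auto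
    then show ?thesis using that h01[of "t 0"] n unfolding Icube_def by auto
  qed
  have comp: "continuous_map (subtopology Rtop (Icube n)) euclideanreal (\<lambda>t. (t(0 := h (t 0))) i)" for i
  proof (cases "i = 0")
    case True
    have "continuous_map (subtopology Rtop (Icube n)) euclideanreal (h \<circ> (\<lambda>t. t 0))"
      by (rule continuous_map_compose[OF continuous_map_from_subtopology[OF cont_proj]]) (simp add: hc)
    then show ?thesis using True by (simp add: o_def)
  next
    case False
    then show ?thesis using continuous_map_from_subtopology[OF cont_proj[of i]] by simp
  qed
  have "continuous_map (subtopology Rtop (Icube n)) Rtop (\<lambda>t. t(0 := h (t 0)))"
    by (rule cont_into_Rtop) (rule comp)
  then show "continuous_map (subtopology Rtop (Icube n)) (subtopology Rtop (Icube n)) (\<lambda>t. t(0 := h (t 0)))"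
    using img by (simp add: continuous_map_in_subtopology image_subset_iff)
next
  fix n :: nat and t assume n: "n \<ge> 1" and t: "t \<in> cube_bd n"
  then obtain i where i: "i < n" "t i = 0 \<or> t i = 1" unfolding cube_bd_def by blast
  have tI: "t \<in> Icube n" using t unfolding cube_bd_def by blast
  have "0 \<le> t 0 \<and> t 0 \<le> 1" using tI n unfolding Icube_def by auto
  then have inI: "t(0 := h (t 0)) \<in> Icube n" using tI h01[of "t 0"] n unfolding Icube_def by auto
  show "t(0 := h (t 0)) \<in> cube_bd n"
  proof (cases "i = 0")
    case True
    then have "h (t 0) = 0 \<or> h (t 0) = 1" using i h0 h1 by auto
    then show ?thesis using inI n unfolding cube_bd_def by (intro CollectI conjI) (auto intro!: exI[of _ 0])
  next
    case False
    then show ?thesis using inI i unfolding cube_bd_def by (intro CollectI conjI) (auto intro!: exI[of _ i])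
  qed
qed

definition tauL :: "nat \<Rightarrow> (nat \<Rightarrow> real) \<Rightarrow> (nat \<Rightarrow> real)" where
  "tauL = (\<lambda>n t. t(0 := min 1 (2 * t 0)))"

definition tauR :: "nat \<Rightarrow> (nat \<Rightarrow> real) \<Rightarrow> (nat \<Rightarrow> real)" where
  "tauR = (\<lambda>n t. t(0 := max 0 (2 * t 0 - 1)))"

lemma ok_tauL: "cube_ok tauL"
proof -
  have "cube_ok (\<lambda>n t. t(0 := (\<lambda>x. min 1 (2 * x)) (t 0)))"
    by (rule cube_ok_upd) (auto intro!: continuous_intros)
  then show ?thesis unfolding tauL_def by simp
qed

lemma ok_tauR: "cube_ok tauR"
proof -
  have "cube_ok (\<lambda>n t. t(0 := (\<lambda>x. max 0 (2 * x - 1)) (t 0)))"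
    by (rule cube_ok_upd) (auto intro!: continuous_intros)
  then show ?thesis unfolding tauR_def by simp
qed

section \<open>The side function\<close>

definition psi :: "nat \<Rightarrow> nat \<Rightarrow> (nat \<Rightarrow> real) \<Rightarrow> real" where
  "psi n k t = (t 0 - 1/2) * (\<Prod>i<n. t i * (1 - t i)) * (1 / (real n * real k))"

definition pfun where
  "pfun q n r = (if r = (\<lambda>_. 0) then 0 else psi n (kof n r) (tof q n r))"

definition Pm where
  "Pm q x = pfun q (fst x) (snd x)"

lemma psi_bd: "t \<in> cube_bd n \<Longrightarrow> psi n k t = 0"
  unfolding cube_bd_def psi_def by (auto simp: prod_zero_iff)

lemma psi_bound:
  assumes "t \<in> Icube n" "n \<ge> 1" "k \<ge> 1"
  shows "\<bar>psi n k t\<bar> \<le> 1 / (real n * real k)"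
proof -
  have t0: "0 \<le> t 0 \<and> t 0 \<le> 1" using assms unfolding Icube_def by auto
  have ti: "0 \<le> t i * (1 - t i) \<and> t i * (1 - t i) \<le> 1" if "i < n" for i
  proof -
    have "0 \<le> t i \<and> t i \<le> 1" using assms that unfolding Icube_def by auto
    then show ?thesis by (simp add: mult_le_one)
  qed
  have p0: "0 \<le> (\<Prod>i<n. t i * (1 - t i))" using ti by (intro prod_nonneg) auto
  have p1: "(\<Prod>i<n. t i * (1 - t i)) \<le> 1" using ti by (intro prod_le_1) auto
  have c: "0 < 1 / (real n * real k)" using assms by simp
  have a: "\<bar>t 0 - 1/2\<bar> \<le> 1" using t0 by linarith
  have "\<bar>psi n k t\<bar> = \<bar>t 0 - 1/2\<bar> * (\<Prod>i<n. t i * (1 - t i)) * (1 / (real n * real k))"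
    unfolding psi_def using p0 c by (simp add: abs_mult)
  also have "\<dots> \<le> 1 * 1 * (1 / (real n * real k))"
    using a p0 p1 c by (intro mult_right_mono mult_mono) auto
  finally show ?thesis by simp
qed

lemma psi_sign:
  assumes "t \<in> Icube n - cube_bd n" "k \<ge> 1" "n \<ge> 1"
  shows "psi n k t \<le> 0 \<longleftrightarrow> t 0 \<le> 1/2" "psi n k t = 0 \<longleftrightarrow> t 0 = 1/2"
proof -
  have "0 < (\<Prod>i<n. t i * (1 - t i))"
    using cube_int[OF assms(1)] by (intro prod_pos) auto
  moreover have "n \<noteq> 0" using assms(3) by simp
  ultimately have "0 < (\<Prod>i<n. t i * (1 - t i)) * (1 / (real n * real k))" using assms(2) by simp
  moreover define c where "c = (\<Prod>i<n. t i * (1 - t i)) * (1 / (real n * real k))"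
  ultimately have pos: "c > 0" by simp
  have e: "psi n k t = (t 0 - 1/2) * c"
    unfolding psi_def c_def by (simp add: mult.assoc)
  show "psi n k t \<le> 0 \<longleftrightarrow> t 0 \<le> 1/2" unfolding e using pos by (simp add: mult_le_0_iff)
  show "psi n k t = 0 \<longleftrightarrow> t 0 = 1/2" unfolding e using pos by simp
qed

lemma psi_cont: "continuous_map (subtopology Rtop (Icube n)) euclideanreal (psi n k)"
proof -
  have p: "continuous_map (subtopology Rtop (Icube n)) euclideanreal (\<lambda>t. t i)" for i
    using continuous_map_from_subtopology[OF cont_proj] .
  have "continuous_map (subtopology Rtop (Icube n)) euclideanreal
      (\<lambda>t. (t 0 - 1/2) * (\<Prod>i<n. t i * (1 - t i)) * (1 / (real n * real k)))"
    by (intro continuous_map_real_mult continuous_map_diff continuous_map_prod p continuous_map_const[THEN iffD2]) auto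
  then show ?thesis unfolding psi_def by (simp add: fun_eq_iff)
qed

lemma pfun_q:
  assumes "std_param q" "n \<ge> 1" "k \<ge> 1" "t \<in> Icube n"
  shows "pfun q n (q n k t) = psi n k t"
proof (cases "t \<in> cube_bd n")
  case True
  then show ?thesis using sp_bd[OF assms(1-3) True] psi_bd[OF True] unfolding pfun_def by simp
next
  case False
  then have ti: "t \<in> Icube n - cube_bd n" using assms(4) by blast
  show ?thesis using sp_int[OF assms(1-3) ti] tof_q[OF assms(1-3) ti] unfolding pfun_def by simp
qed

lemma pfun_bound:
  assumes "std_param q" "n \<ge> 1" "k \<ge> 1" "r \<in> sph n k"
  shows "\<bar>pfun q n r\<bar> \<le> 1 / (real n * real k)"
proof (cases "r = (\<lambda>_. 0)")
  case True then show ?thesis unfolding pfun_def using assms by simp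
next
  case False
  note te = tof_ex[OF assms False]
  show ?thesis using psi_bound[of "tof q n r" n k] te False assms unfolding pfun_def by simp
qed

lemma small_ev:
  assumes "openin euclideanreal V" "(0::real) \<in> V"
  shows "\<exists>e>0. \<forall>y. \<bar>y\<bar> < e \<longrightarrow> y \<in> V"
proof -
  obtain e where "e > 0" "ball 0 e \<subseteq> V" using assms open_contains_ball by (metis open_openin)
  then show ?thesis by (force simp: subset_iff dist_real_def)
qed

lemma ev_inv_less: "e > 0 \<Longrightarrow> \<forall>\<^sub>F k in sequentially. 1 / real k < (e::real)"
proof -
  assume e: "e > 0"
  show ?thesis using eventually_ge_at_top[of "nat \<lceil>1/e\<rceil> + 1"]
  proof eventually_elim
    case (elim k)
    then have k: "real k > 1 / e" by linarith
    moreover have "1 / e > 0" using e by simp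
    ultimately have "real k > 0" by linarith
    then show ?case using e k by (simp add: field_simps)
  qed
qed

lemma pfun_cont:
  assumes sp: "std_param q" and n: "n \<ge> 1"
  shows "continuous_map (Hn_top n) euclideanreal (pfun q n)"
proof (rule glue)
  fix k :: nat assume k: "k \<ge> 1"
  show "continuous_map (subtopology Rtop (sph n k)) euclideanreal (pfun q n)"
  proof (rule via_quot[OF sp n k])
    show "continuous_map (subtopology Rtop (Icube n)) euclideanreal (pfun q n \<circ> q n k)"
      by (rule continuous_map_eq[OF psi_cont]) (simp add: pfun_q[OF sp n k])
  qed
next
  show "pfun q n ` Hn n \<subseteq> topspace euclideanreal" by simp
next
  fix V assume V: "openin euclideanreal V" "pfun q n (\<lambda>_. 0) \<in> V"
  then obtain e where e: "e > 0" "\<And>y. \<bar>y\<bar> < e \<Longrightarrow> y \<in> V" using small_ev unfolding pfun_def by auto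
  show "\<forall>\<^sub>F k in sequentially. pfun q n ` sph n k \<subseteq> V"
    using ev_inv_less[OF e(1)] eventually_ge_at_top[of 1]
  proof eventually_elim
    case (elim k)
    show ?case
    proof
      fix y assume "y \<in> pfun q n ` sph n k"
      then obtain r where r: "r \<in> sph n k" "y = pfun q n r" by blast
      have "1 / (real n * real k) \<le> 1 / real k" using n elim by (simp add: field_simps)
      then have "\<bar>y\<bar> < e" using pfun_bound[OF sp n elim(2) r(1)] r(2) elim(1) by linarith
      then show "y \<in> V" using e by blast
    qed
  qed
qed

lemma Pm_emb: "r \<in> Hn n \<Longrightarrow> Pm q (emb n r) = pfun q n r"
  unfolding Pm_def emb_def thetaH_def pfun_def by auto

lemma Pm_theta [simp]: "Pm q thetaH = 0"
  unfolding Pm_def thetaH_def pfun_def by simp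

lemma Pm_cont:
  assumes sp: "std_param q"
  shows "continuous_map Hinf_top euclideanreal (Pm q)"
proof (rule cont_from_Hinf)
  fix n :: nat assume n: "n \<ge> 1"
  show "continuous_map (Hn_top n) euclideanreal (Pm q \<circ> emb n)"
    by (rule continuous_map_eq[OF pfun_cont[OF sp n]]) (simp add: Pm_emb)
next
  fix V assume V: "openin euclideanreal V" "Pm q thetaH \<in> V"
  then obtain e where e: "e > 0" "\<And>y. \<bar>y\<bar> < e \<Longrightarrow> y \<in> V" using small_ev by auto
  show "\<forall>\<^sub>F n in sequentially. Pm q ` emb n ` Hn n \<subseteq> V"
    using ev_inv_less[OF e(1)] eventually_ge_at_top[of 1]
  proof eventually_elim
    case (elim n)
    show ?case
    proof
      fix y assume "y \<in> Pm q ` emb n ` Hn n"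
      then obtain r where r: "r \<in> Hn n" "y = Pm q (emb n r)" by blast
      obtain k where k: "k \<ge> 1" "r \<in> sph n k" using Hn_cases r(1) by blast
      have "1 / (real n * real k) \<le> 1 / real n" using k elim by (simp add: field_simps)
      then have "\<bar>y\<bar> < e" using pfun_bound[OF sp elim(2) k] r Pm_emb elim(1) by fastforce
      then show "y \<in> V" using e by blast
    qed
  qed
qed simp

section \<open>Concatenation is continuous in families\<close>

lemma hconcat_theta [simp]: "hconcat q f g thetaH = f thetaH"
  unfolding hconcat_def by simp

lemma hconcat_nz:
  assumes "r \<noteq> (\<lambda>_. 0)"
  shows "hconcat q f g (n, r) =
    (if tof q n r 0 \<le> 1/2 then f (emb n (q n (kof n r) ((tof q n r)(0 := 2 * tof q n r 0))))
     else g (emb n (q n (kof n r) ((tof q n r)(0 := 2 * tof q n r 0 - 1)))))"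
proof -
  have "(n, r) \<noteq> thetaH" using assms unfolding thetaH_def by auto
  then show ?thesis unfolding hconcat_def kof_def tof_def by (simp add: Let_def)
qed

lemma nz_data:
  assumes sp: "std_param q" and n: "n \<ge> 1" and r: "r \<in> Hn n" "r \<noteq> (\<lambda>_. 0)"
  obtains k where "k \<ge> 1" "kof n r = k" "tof q n r \<in> Icube n - cube_bd n"
    "Pm q (n, r) = psi n k (tof q n r)"
    "\<And>\<phi>. Amap q \<phi> (n, r) = emb n (q n k (\<phi> n (tof q n r)))"
proof -
  obtain k where k: "k \<ge> 1" "r \<in> sph n k" using Hn_cases r(1) by blast
  note te = tof_ex[OF sp n k r(2)]
  show ?thesis
  proof (rule that[OF k(1) te(1) te(2)])
    show "Pm q (n, r) = psi n k (tof q n r)" unfolding Pm_def pfun_def using r(2) te(1) by simp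
    show "Amap q \<phi> (n, r) = emb n (q n k (\<phi> n (tof q n r)))" for \<phi>
      unfolding Amap_def smap_def using r(2) te(1) by simp
  qed
qed

lemma hconcat_eq:
  assumes sp: "std_param q" and x: "x \<in> Hinf_set"
  shows "hconcat q f g x = (if Pm q x \<le> 0 then f (Amap q tauL x) else g (Amap q tauR x))"
  using x
proof (cases rule: Hinf_set_cases)
  case 1 then show ?thesis by simp
next
  case (2 n r)
  obtain k where k: "k \<ge> 1" "kof n r = k" "tof q n r \<in> Icube n - cube_bd n"
    "Pm q (n, r) = psi n k (tof q n r)"
    "\<And>\<phi>. Amap q \<phi> (n, r) = emb n (q n k (\<phi> n (tof q n r)))"
    using nz_data[OF sp 2(1,2,3)] by metis
  define t where "t = tof q n r"
  have sg: "Pm q (n, r) \<le> 0 \<longleftrightarrow> t 0 \<le> 1/2" using psi_sign(1)[OF k(3) k(1) 2(1)] k(4) t_def by simp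
  show ?thesis
  proof (cases "t 0 \<le> 1/2")
    case True
    then have "tauL n t = t(0 := 2 * t 0)" unfolding tauL_def by simp
    then show ?thesis using True sg k hconcat_nz[OF 2(3), of q f g n] 2(4) unfolding t_def by simp
  next
    case False
    then have "tauR n t = t(0 := 2 * t 0 - 1)" unfolding tauR_def by simp
    then show ?thesis using False sg k hconcat_nz[OF 2(3), of q f g n] 2(4) unfolding t_def by simp
  qed
qed

lemma Amap_half:
  assumes sp: "std_param q" and x: "x \<in> Hinf_set" and P: "Pm q x = 0"
  shows "Amap q tauL x = thetaH" "Amap q tauR x = thetaH"
proof -
  have "Amap q tauL x = thetaH \<and> Amap q tauR x = thetaH"
    using x
  proof (cases rule: Hinf_set_cases)
    case 1 then show ?thesis by simp
  next
    case (2 n r)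
    obtain k where k: "k \<ge> 1" "kof n r = k" "tof q n r \<in> Icube n - cube_bd n"
      "Pm q (n, r) = psi n k (tof q n r)"
      "\<And>\<phi>. Amap q \<phi> (n, r) = emb n (q n k (\<phi> n (tof q n r)))"
      using nz_data[OF sp 2(1,2,3)] by metis
    define t where "t = tof q n r"
    have t0: "t 0 = 1/2" using psi_sign(2)[OF k(3) k(1) 2(1)] k(4) P 2(4) t_def by simp
    have tI: "t \<in> Icube n" using k(3) t_def by simp
    have n0: "0 < n" using 2(1) by simp
    have "tauL n t \<in> cube_bd n" "tauR n t \<in> cube_bd n"
    proof -
      have "tauL n t \<in> Icube n" "tauR n t \<in> Icube n"
        using cube_ok_in[OF ok_tauL 2(1) tI] cube_ok_in[OF ok_tauR 2(1) tI] .
      moreover have "tauL n t 0 = 1" "tauR n t 0 = 0" unfolding tauL_def tauR_def using t0 by simp_all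
      ultimately show "tauL n t \<in> cube_bd n" "tauR n t \<in> cube_bd n"
        unfolding cube_bd_def using n0 by auto
    qed
    then show ?thesis using k(5)[of tauL] k(5)[of tauR] sp_bd[OF sp 2(1) k(1)] 2(4) unfolding t_def by simp
  qed
  then show "Amap q tauL x = thetaH" "Amap q tauR x = thetaH" by simp_all
qed

lemma HC:
  assumes sp: "std_param q"
    and F: "continuous_map (prod_topology (top_of_set {0..1::real}) Hinf_top) Z F"
    and G: "continuous_map (prod_topology (top_of_set {0..1::real}) Hinf_top) Z G"
    and FG: "\<And>s. s \<in> {0..1} \<Longrightarrow> F (s, thetaH) = G (s, thetaH)"
  shows "continuous_map (prod_topology (top_of_set {0..1::real}) Hinf_top) Z
           (\<lambda>z. hconcat q (\<lambda>y. F (fst z, y)) (\<lambda>y. G (fst z, y)) (snd z))"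
proof -
  let ?X = "prod_topology (top_of_set {0..1::real}) Hinf_top"
  have c1: "continuous_map ?X ?X (\<lambda>z. (fst z, Amap q \<phi> (snd z)))" if "cube_ok \<phi>" for \<phi>
    by (intro continuous_map_pairedI continuous_map_fst continuous_map_compose[OF continuous_map_snd Amap_cont[OF sp that], unfolded o_def])
  have cf: "continuous_map ?X Z (\<lambda>z. F (fst z, Amap q tauL (snd z)))"
    using continuous_map_compose[OF c1[OF ok_tauL] F] by (simp add: o_def)
  have cg: "continuous_map ?X Z (\<lambda>z. G (fst z, Amap q tauR (snd z)))"
    using continuous_map_compose[OF c1[OF ok_tauR] G] by (simp add: o_def)
  have cp: "continuous_map ?X euclideanreal (\<lambda>z. Pm q (snd z))"
    using continuous_map_compose[OF continuous_map_snd Pm_cont[OF sp]] by (simp add: o_def)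
  have M: "continuous_map ?X Z (\<lambda>z. if Pm q (snd z) \<le> 0 then F (fst z, Amap q tauL (snd z)) else G (fst z, Amap q tauR (snd z)))"
  proof (rule continuous_map_cases_le[where q = "\<lambda>z. 0"])
    show "continuous_map ?X euclideanreal (\<lambda>z. Pm q (snd z))" by (rule cp)
    show "continuous_map ?X euclideanreal (\<lambda>z. 0)" by simp
    show "continuous_map (subtopology ?X {x \<in> topspace ?X. Pm q (snd x) \<le> 0}) Z (\<lambda>z. F (fst z, Amap q tauL (snd z)))"
      by (rule continuous_map_from_subtopology[OF cf])
    show "continuous_map (subtopology ?X {x \<in> topspace ?X. 0 \<le> Pm q (snd x)}) Z (\<lambda>z. G (fst z, Amap q tauR (snd z)))"
      by (rule continuous_map_from_subtopology[OF cg])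
  next
    fix z assume z: "z \<in> topspace ?X" "Pm q (snd z) = 0"
    then have "snd z \<in> Hinf_set" "fst z \<in> {0..1}" by (auto simp: topspace_prod_topology)
    then show "F (fst z, Amap q tauL (snd z)) = G (fst z, Amap q tauR (snd z))"
      using Amap_half[OF sp _ z(2)] FG by simp
  qed
  show ?thesis
  proof (rule continuous_map_eq[OF M])
    fix z assume "z \<in> topspace ?X"
    then have "snd z \<in> Hinf_set" by (auto simp: topspace_prod_topology)
    then show "(if Pm q (snd z) \<le> 0 then F (fst z, Amap q tauL (snd z)) else G (fst z, Amap q tauR (snd z)))
        = hconcat q (\<lambda>y. F (fst z, y)) (\<lambda>y. G (fst z, y)) (snd z)"
      using hconcat_eq[OF sp, of "snd z" "\<lambda>y. F (fst z, y)" "\<lambda>y. G (fst z, y)"] by simp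
  qed
qed

section \<open>Homotopy invariance\<close>

abbreviation Rel where
  "Rel X x0 f g \<equiv> homotopic_with (\<lambda>h. h thetaH = x0) Hinf_top X f g"

lemma hc_based:
  assumes sp: "std_param q" and f: "f \<in> based_maps X x0" and g: "g \<in> based_maps X x0"
  shows "hconcat q f g \<in> based_maps X x0"
proof -
  let ?X = "prod_topology (top_of_set {0..1::real}) Hinf_top"
  have f1: "continuous_map Hinf_top X f" "continuous_map Hinf_top X g" using f g unfolding based_maps_def by auto
  have cf: "continuous_map ?X X (\<lambda>z. f (snd z))"
    using continuous_map_compose[OF continuous_map_snd f1(1)] by (simp add: o_def)
  have cg: "continuous_map ?X X (\<lambda>z. g (snd z))"
    using continuous_map_compose[OF continuous_map_snd f1(2)] by (simp add: o_def)
  have H: "continuous_map ?X X (\<lambda>z. hconcat q (\<lambda>y. f y) (\<lambda>y. g y) (snd z))"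
    using HC[OF sp cf cg] f g unfolding based_maps_def by simp
  have e: "continuous_map Hinf_top ?X (\<lambda>y. (0::real, y))"
    by (intro continuous_map_pairedI) (simp_all add: continuous_map_id[unfolded id_def])
  have "continuous_map Hinf_top X (hconcat q f g)"
    using continuous_map_compose[OF e H] by (simp add: o_def)
  then show ?thesis using f unfolding based_maps_def by simp
qed

lemma hc_homot:
  assumes sp: "std_param q" and fh: "Rel X x0 f f'" and gh: "Rel X x0 g g'"
  shows "Rel X x0 (hconcat q f g) (hconcat q f' g')"
proof -
  obtain h1 where h1: "continuous_map (prod_topology (top_of_set {0..1::real}) Hinf_top) X h1"
    "\<forall>x. h1 (0, x) = f x" "\<forall>x. h1 (1, x) = f' x" "\<forall>t\<in>{0..1}. h1 (t, thetaH) = x0"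
    using fh unfolding homotopic_with_def by auto
  obtain h2 where h2: "continuous_map (prod_topology (top_of_set {0..1::real}) Hinf_top) X h2"
    "\<forall>x. h2 (0, x) = g x" "\<forall>x. h2 (1, x) = g' x" "\<forall>t\<in>{0..1}. h2 (t, thetaH) = x0"
    using gh unfolding homotopic_with_def by auto
  have C: "continuous_map (prod_topology (top_of_set {0..1::real}) Hinf_top) X
      (\<lambda>z. hconcat q (\<lambda>y. h1 (fst z, y)) (\<lambda>y. h2 (fst z, y)) (snd z))"
    using HC[OF sp h1(1) h2(1)] h1(4) h2(4) by simp
  have e0: "(\<lambda>y. h1 (0, y)) = f" "(\<lambda>y. h2 (0, y)) = g" "(\<lambda>y. h1 (1, y)) = f'" "(\<lambda>y. h2 (1, y)) = g'"
    using h1 h2 by auto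
  show ?thesis unfolding homotopic_with_def
    by (rule exI[of _ "\<lambda>z. hconcat q (\<lambda>y. h1 (fst z, y)) (\<lambda>y. h2 (fst z, y)) (snd z)"])
       (use C e0 h1(4) in simp)
qed

lemma hconcat_comp: "h (hconcat q f g p) = hconcat q (\<lambda>y. h (f y)) (\<lambda>y. h (g y)) p"
  unfolding hconcat_def Let_def by simp

lemma cls_self: "f \<in> based_maps X x0 \<Longrightarrow> f \<in> hclass X x0 f"
  unfolding hclass_def based_maps_def by simp

lemma cls_mem: "g \<in> hclass X x0 f \<Longrightarrow> g \<in> based_maps X x0 \<and> Rel X x0 f g"
  unfolding hclass_def by simp

lemma cls_eq:
  assumes "f \<in> based_maps X x0" "g \<in> based_maps X x0"
  shows "hclass X x0 f = hclass X x0 g \<longleftrightarrow> Rel X x0 f g"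
proof
  assume e: "hclass X x0 f = hclass X x0 g"
  have "g \<in> hclass X x0 f" using cls_self[OF assms(2)] e by simp
  then show "Rel X x0 f g" using cls_mem[of g X x0 f] by simp
next
  assume r: "Rel X x0 f g"
  have "Rel X x0 g f" using r homotopic_with_symD by metis
  have "Rel X x0 f h \<longleftrightarrow> Rel X x0 g h" for h
    using homotopic_with_trans[OF r, of h] homotopic_with_trans[OF \<open>Rel X x0 g f\<close>, of h] by metis
  then show "hclass X x0 f = hclass X x0 g"
    unfolding hclass_def by simp
qed

lemma rep_props:
  assumes "A \<in> hclass X x0 ` based_maps X x0"
  shows "(SOME f. f \<in> A) \<in> based_maps X x0" "A = hclass X x0 (SOME f. f \<in> A)"
proof -
  obtain f where f: "f \<in> based_maps X x0" "A = hclass X x0 f" using assms by blast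
  have "f \<in> A" using cls_self[OF f(1)] f(2) by simp
  then have s: "(SOME f. f \<in> A) \<in> A" using someI[of "\<lambda>f. f \<in> A"] by blast
  have s': "(SOME f. f \<in> A) \<in> hclass X x0 f" using s f(2) by simp
  show b: "(SOME f. f \<in> A) \<in> based_maps X x0" using cls_mem[OF s'] by simp
  have "Rel X x0 f (SOME f. f \<in> A)" using cls_mem[OF s'] by simp
  then show "A = hclass X x0 (SOME f. f \<in> A)" using f(2) cls_eq[OF f(1) b] by simp
qed

lemma rep_cls:
  assumes "f \<in> based_maps X x0"
  shows "Rel X x0 f (SOME g. g \<in> hclass X x0 f)"
proof -
  have A: "hclass X x0 f \<in> hclass X x0 ` based_maps X x0" using assms by simp
  note rp = rep_props[OF A]
  show ?thesis using cls_eq[OF assms rp(1)] rp(2) by simp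
qed

lemma Hinf_carrier [simp]: "carrier (Hinf_grp q X x0) = hclass X x0 ` based_maps X x0"
  unfolding Hinf_grp_def by simp

lemma Hinf_mult [simp]:
  "A \<otimes>\<^bsub>Hinf_grp q X x0\<^esub> B = hclass X x0 (hconcat q (SOME f. f \<in> A) (SOME g. g \<in> B))"
  unfolding Hinf_grp_def by simp

lemma proj_based:
  assumes "f \<in> based_maps (product_topology X I) (restrict x I)" "i \<in> I"
  shows "(\<lambda>p. f p i) \<in> based_maps (X i) (x i)"
proof -
  have "continuous_map Hinf_top (X i) ((\<lambda>y. y i) \<circ> f)"
    using assms unfolding based_maps_def
    by (intro continuous_map_compose[OF _ continuous_map_product_projection]) auto
  then show ?thesis using assms unfolding based_maps_def by (simp add: o_def)
qed

lemma proj_rel: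
  assumes "Rel (product_topology X I) (restrict x I) f g" "i \<in> I"
  shows "Rel (X i) (x i) (\<lambda>p. f p i) (\<lambda>p. g p i)"
proof -
  have "Rel (X i) (x i) ((\<lambda>y. y i) \<circ> f) ((\<lambda>y. y i) \<circ> g)"
    by (rule homotopic_with_compose_continuous_map_left[OF assms(1) continuous_map_product_projection[OF assms(2)]])
       (use assms(2) in simp)
  then show ?thesis by (simp add: o_def)
qed

lemma tuple_based:
  assumes "\<And>i. i \<in> I \<Longrightarrow> f i \<in> based_maps (X i) (x i)"
  shows "(\<lambda>p. \<lambda>j\<in>I. f j p) \<in> based_maps (product_topology X I) (restrict x I)"
proof -
  have "continuous_map Hinf_top (product_topology X I) (\<lambda>p. \<lambda>j\<in>I. f j p)"
    unfolding continuous_map_componentwise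
    using assms unfolding based_maps_def by auto
  then show ?thesis using assms unfolding based_maps_def by auto
qed

lemma tuple_rel:
  assumes f: "f \<in> based_maps (product_topology X I) (restrict x I)"
    and g: "g \<in> based_maps (product_topology X I) (restrict x I)"
    and r: "\<And>i. i \<in> I \<Longrightarrow> Rel (X i) (x i) (\<lambda>p. f p i) (\<lambda>p. g p i)"
  shows "Rel (product_topology X I) (restrict x I) f g"
proof -
  have "\<forall>i\<in>I. \<exists>h. continuous_map (prod_topology (top_of_set {0..1::real}) Hinf_top) (X i) h \<and>
      (\<forall>y. h (0, y) = f y i) \<and> (\<forall>y. h (1, y) = g y i) \<and> (\<forall>t\<in>{0..1}. h (t, thetaH) = x i)"
    using r unfolding homotopic_with_def by blast
  then obtain H where H: "\<And>i. i \<in> I \<Longrightarrow> continuous_map (prod_topology (top_of_set {0..1::real}) Hinf_top) (X i) (H i)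
      \<and> (\<forall>y. H i (0, y) = f y i) \<and> (\<forall>y. H i (1, y) = g y i) \<and> (\<forall>t\<in>{0..1}. H i (t, thetaH) = x i)"
    by metis
  define K where "K = (\<lambda>z. \<lambda>i\<in>I. H i z)"
  have P: "\<And>h k. (\<And>y. y \<in> topspace Hinf_top \<Longrightarrow> h y = k y) \<Longrightarrow> (h thetaH = restrict x I \<longleftrightarrow> k thetaH = restrict x I)"
    by simp
  have cK: "continuous_map (prod_topology (top_of_set {0..1::real}) Hinf_top) (product_topology X I) K"
    unfolding continuous_map_componentwise K_def using H by auto
  have fe: "f y \<in> extensional I" "g y \<in> extensional I" if "y \<in> topspace Hinf_top" for y
    using f g that unfolding based_maps_def
    by (auto dest!: continuous_map_image_subset_topspace simp: PiE_def image_subset_iff)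
  show ?thesis
  proof (rule iffD2[OF homotopic_with[where P="\<lambda>h. h thetaH = restrict x I" and X=Hinf_top]], rule P, assumption, intro exI conjI ballI)
    show "continuous_map (prod_topology (top_of_set {0..1::real}) Hinf_top) (product_topology X I) K" by (rule cK)
  next
    fix y assume y: "y \<in> topspace Hinf_top"
    have h0: "H i (0, y) = f y i" "H i (1, y) = g y i" if "i \<in> I" for i
      using H[OF that] by blast+
    have "K (0, y) = (\<lambda>i\<in>I. f y i)" unfolding K_def by (rule restrict_cong) (auto simp: h0)
    then show "K (0, y) = f y" using extensional_restrict[OF fe(1)[OF y]] by simp
    have "K (1, y) = (\<lambda>i\<in>I. g y i)" unfolding K_def by (rule restrict_cong) (auto simp: h0)
    then show "K (1, y) = g y" using extensional_restrict[OF fe(2)[OF y]] by simp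
  next
    fix t :: real assume "t \<in> {0..1}"
    then have "H i (t, thetaH) = x i" if "i \<in> I" for i using H[OF that] by blast
    then show "K (t, thetaH) = restrict x I" unfolding K_def by (intro restrict_cong) auto
  qed
qed

theorem theorem3p4:
  fixes X :: "'i \<Rightarrow> 'a topology" and x :: "'i \<Rightarrow> 'a" and I :: "'i set"
    and q :: "nat \<Rightarrow> nat \<Rightarrow> (nat \<Rightarrow> real) \<Rightarrow> (nat \<Rightarrow> real)"
  assumes "std_param q"
    and "\<forall>i\<in>I. x i \<in> topspace (X i)"
  shows "Hinf_grp q (product_topology X I) (restrict x I)
           \<cong> product_group I (\<lambda>i. Hinf_grp q (X i) (x i))"
proof -
  note sp = assms(1)
  let ?PX = "product_topology X I" and ?px = "restrict x I"
  let ?BP = "based_maps ?PX ?px"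
  let ?rep = "\<lambda>A. SOME f. f \<in> A"
  define \<Phi> where "\<Phi> = (\<lambda>A. \<lambda>i\<in>I. hclass (X i) (x i) (\<lambda>p. (SOME f. f \<in> A) p i))"
  have repP: "?rep A \<in> ?BP" "A = hclass ?PX ?px (?rep A)" if "A \<in> hclass ?PX ?px ` ?BP" for A
    using rep_props[OF that] by auto
  have into: "\<Phi> A \<in> (\<Pi>\<^sub>E i\<in>I. carrier (Hinf_grp q (X i) (x i)))" if A: "A \<in> hclass ?PX ?px ` ?BP" for A
    unfolding \<Phi>_def using proj_based[OF repP(1)[OF A]] by auto
  have hom: "\<Phi> (A \<otimes>\<^bsub>Hinf_grp q ?PX ?px\<^esub> B) = \<Phi> A \<otimes>\<^bsub>product_group I (\<lambda>i. Hinf_grp q (X i) (x i))\<^esub> \<Phi> B"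
    if A: "A \<in> hclass ?PX ?px ` ?BP" and B: "B \<in> hclass ?PX ?px ` ?BP" for A B
  proof -
    define a where "a = ?rep A"
    define b where "b = ?rep B"
    have a: "a \<in> ?BP" and b: "b \<in> ?BP" using repP(1)[OF A] repP(1)[OF B] a_def b_def by auto
    define c where "c = hconcat q a b"
    have c: "c \<in> ?BP" unfolding c_def by (rule hc_based[OF sp a b])
    have "hclass (X i) (x i) (\<lambda>p. ?rep (hclass ?PX ?px c) p i)
        = hclass (X i) (x i) (hconcat q (?rep (hclass (X i) (x i) (\<lambda>p. a p i))) (?rep (hclass (X i) (x i) (\<lambda>p. b p i))))"
      if i: "i \<in> I" for i
    proof -
      let ?B = "based_maps (X i) (x i)"
      have ai: "(\<lambda>p. a p i) \<in> ?B" and bi: "(\<lambda>p. b p i) \<in> ?B" using proj_based[OF a i] proj_based[OF b i] by auto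
      have rc: "?rep (hclass ?PX ?px c) \<in> ?BP"
        using repP(1)[of "hclass ?PX ?px c"] c by auto
      have r1: "Rel (X i) (x i) (\<lambda>p. c p i) (\<lambda>p. ?rep (hclass ?PX ?px c) p i)"
        using proj_rel[OF rep_cls[OF c] i] .
      have ci: "(\<lambda>p. c p i) = hconcat q (\<lambda>p. a p i) (\<lambda>p. b p i)"
        unfolding c_def by (rule ext) (rule hconcat_comp[of "\<lambda>y. y i", simplified])
      have ra: "Rel (X i) (x i) (\<lambda>p. a p i) (?rep (hclass (X i) (x i) (\<lambda>p. a p i)))" using rep_cls[OF ai] .
      have rb: "Rel (X i) (x i) (\<lambda>p. b p i) (?rep (hclass (X i) (x i) (\<lambda>p. b p i)))" using rep_cls[OF bi] .
      have r2: "Rel (X i) (x i) (hconcat q (\<lambda>p. a p i) (\<lambda>p. b p i))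
                  (hconcat q (?rep (hclass (X i) (x i) (\<lambda>p. a p i))) (?rep (hclass (X i) (x i) (\<lambda>p. b p i))))"
        by (rule hc_homot[OF sp ra rb])
      have r1': "Rel (X i) (x i) (\<lambda>p. ?rep (hclass ?PX ?px c) p i) (hconcat q (\<lambda>p. a p i) (\<lambda>p. b p i))"
        using homotopic_with_symD[OF r1] ci by simp
      have R: "Rel (X i) (x i) (\<lambda>p. ?rep (hclass ?PX ?px c) p i)
          (hconcat q (?rep (hclass (X i) (x i) (\<lambda>p. a p i))) (?rep (hclass (X i) (x i) (\<lambda>p. b p i))))"
        by (rule homotopic_with_trans[OF r1' r2])
      have m1: "(\<lambda>p. ?rep (hclass ?PX ?px c) p i) \<in> ?B" by (rule proj_based[OF rc i])
      have ra': "?rep (hclass (X i) (x i) (\<lambda>p. a p i)) \<in> ?B"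
        using rep_props(1)[of "hclass (X i) (x i) (\<lambda>p. a p i)"] ai by auto
      have rb': "?rep (hclass (X i) (x i) (\<lambda>p. b p i)) \<in> ?B"
        using rep_props(1)[of "hclass (X i) (x i) (\<lambda>p. b p i)"] bi by auto
      have m2: "hconcat q (?rep (hclass (X i) (x i) (\<lambda>p. a p i))) (?rep (hclass (X i) (x i) (\<lambda>p. b p i))) \<in> ?B"
        by (rule hc_based[OF sp ra' rb'])
      show ?thesis using cls_eq[OF m1 m2] R by simp
    qed
    then show ?thesis
      unfolding \<Phi>_def Hinf_mult mult_product_group c_def a_def b_def
      by (intro restrict_cong) auto
  qed
  have inj: "inj_on \<Phi> (hclass ?PX ?px ` ?BP)"
  proof (rule inj_onI)
    fix A B assume A: "A \<in> hclass ?PX ?px ` ?BP" and B: "B \<in> hclass ?PX ?px ` ?BP" and e: "\<Phi> A = \<Phi> B"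
    have "Rel (X i) (x i) (\<lambda>p. ?rep A p i) (\<lambda>p. ?rep B p i)" if i: "i \<in> I" for i
    proof -
      have "\<Phi> A i = \<Phi> B i" using e by simp
      then have "hclass (X i) (x i) (\<lambda>p. ?rep A p i) = hclass (X i) (x i) (\<lambda>p. ?rep B p i)"
        unfolding \<Phi>_def using i by simp
      then show ?thesis using cls_eq[OF proj_based[OF repP(1)[OF A] i] proj_based[OF repP(1)[OF B] i]] by simp
    qed
    then have "Rel ?PX ?px (?rep A) (?rep B)" by (intro tuple_rel repP(1) A B)
    then have "hclass ?PX ?px (?rep A) = hclass ?PX ?px (?rep B)"
      using cls_eq[OF repP(1)[OF A] repP(1)[OF B]] by simp
    then show "A = B" using repP(2)[OF A] repP(2)[OF B] by simp
  qed
  have surj: "(\<Pi>\<^sub>E i\<in>I. carrier (Hinf_grp q (X i) (x i))) \<subseteq> \<Phi> ` (hclass ?PX ?px ` ?BP)"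
  proof
    fix c assume c: "c \<in> (\<Pi>\<^sub>E i\<in>I. carrier (Hinf_grp q (X i) (x i)))"
    then have "\<forall>i\<in>I. \<exists>f. f \<in> based_maps (X i) (x i) \<and> c i = hclass (X i) (x i) f"
      by (auto simp: PiE_iff image_iff)
    then obtain f where f: "\<And>i. i \<in> I \<Longrightarrow> f i \<in> based_maps (X i) (x i) \<and> c i = hclass (X i) (x i) (f i)"
      by metis
    define F where "F = (\<lambda>p. \<lambda>j\<in>I. f j p)"
    have F: "F \<in> ?BP" unfolding F_def by (rule tuple_based) (use f in blast)
    have e: "\<Phi> (hclass ?PX ?px F) = c"
    proof (rule ext)
      fix i show "\<Phi> (hclass ?PX ?px F) i = c i"
      proof (cases "i \<in> I")
        case False then show ?thesis unfolding \<Phi>_def using c by (simp add: PiE_def extensional_def)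
      next
        case True
        have fi: "f i \<in> based_maps (X i) (x i)" "c i = hclass (X i) (x i) (f i)" using f[OF True] by auto
        have Fi: "(\<lambda>p. F p i) = f i" unfolding F_def using True by (simp add: fun_eq_iff)
        have rF: "?rep (hclass ?PX ?px F) \<in> ?BP" using repP(1)[of "hclass ?PX ?px F"] F by auto
        have R0: "Rel (X i) (x i) (\<lambda>p. F p i) (\<lambda>p. ?rep (hclass ?PX ?px F) p i)"
          by (rule proj_rel[OF rep_cls[OF F] True])
        have R: "Rel (X i) (x i) (\<lambda>p. ?rep (hclass ?PX ?px F) p i) (f i)"
          using homotopic_with_symD[OF R0] Fi by simp
        have "hclass (X i) (x i) (\<lambda>p. ?rep (hclass ?PX ?px F) p i) = hclass (X i) (x i) (f i)"
          using cls_eq[OF proj_based[OF rF True] fi(1)] R by simp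
        then show ?thesis unfolding \<Phi>_def using True fi(2) by simp
      qed
    qed
    have m: "hclass ?PX ?px F \<in> hclass ?PX ?px ` ?BP" using F by simp
    show "c \<in> \<Phi> ` (hclass ?PX ?px ` ?BP)" using image_eqI[where f=\<Phi>, OF e[symmetric] m] .
  qed
  have "\<Phi> \<in> iso (Hinf_grp q ?PX ?px) (product_group I (\<lambda>i. Hinf_grp q (X i) (x i)))"
    unfolding iso_def hom_def
  proof (intro CollectI conjI)
    show "\<Phi> \<in> carrier (Hinf_grp q ?PX ?px) \<rightarrow> carrier (product_group I (\<lambda>i. Hinf_grp q (X i) (x i)))"
      using into by simp
    show "\<forall>A\<in>carrier (Hinf_grp q ?PX ?px). \<forall>B\<in>carrier (Hinf_grp q ?PX ?px).
        \<Phi> (A \<otimes>\<^bsub>Hinf_grp q ?PX ?px\<^esub> B) = \<Phi> A \<otimes>\<^bsub>product_group I (\<lambda>i. Hinf_grp q (X i) (x i))\<^esub> \<Phi> B"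
      using hom by simp
    show "bij_betw \<Phi> (carrier (Hinf_grp q ?PX ?px)) (carrier (product_group I (\<lambda>i. Hinf_grp q (X i) (x i))))"
      unfolding bij_betw_def using inj into surj by auto
  qed
  then show ?thesis unfolding is_iso_def by blast
qed

end
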